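(* Let $\varphi:\mathbb{R}^n\to\mathbb{R}$ be twice continuously differentiable and convex. Then $\det(\nabla^2\varphi(x))=0$ for all $x\in\mathbb{R}^n$ if and only if there exist $v\in\mathbb{R}^n\setminus\{0\}$ and $c\in\mathbb{R}$ such that $\langle v,\nabla\varphi(x)\rangle=c$ for all $x\in\mathbb{R}^n$. *)

theory Defs
  imports "HOL-Analysis.Analysis"
begin

definition grad :: "(real^'n \<Rightarrow> real) \<Rightarrow> real^'n \<Rightarrow> real^'n" where
  "grad f x = (\<chi> i. frechet_derivative f (at x) (axis i 1))"

definition hess :: "(real^'n \<Rightarrow> real) \<Rightarrow> real^'n \<Rightarrow> real^'n^'n" where
  "hess f x = matrix (frechet_derivative (grad f) (at x))"

definition C2 :: "(real^'n \<Rightarrow> real) \<Rightarrow> bool" where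
  "C2 f \<longleftrightarrow> (\<forall>x. f differentiable at x) \<and> (\<forall>x. grad f differentiable at x)
            \<and> continuous_on UNIV (hess f)"

end

theory Submission
  imports Defs
begin

lemma grad_deriv:
  assumes "f differentiable at x"
  shows "(f has_derivative (\<lambda>h. grad f x \<bullet> h)) (at x)"
proof -
  let ?D = "frechet_derivative f (at x)"
  have d: "(f has_derivative ?D) (at x)" using assms frechet_derivative_works by blast
  then have lin: "linear ?D" using has_derivative_linear by blast
  have eq: "?D h = grad f x \<bullet> h" for h
  proof -
    have hs: "h = (\<Sum>i\<in>UNIV. h$i *\<^sub>R axis i 1)"
      by (simp add: vec_eq_iff axis_def if_distrib cong: if_cong)
    have "?D h = (\<Sum>i\<in>UNIV. h$i * ?D (axis i 1))"
      by (subst hs) (simp add: linear_sum[OF lin] linear_scale[OF lin])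
    also have "\<dots> = grad f x \<bullet> h"
      by (simp add: inner_vec_def grad_def mult.commute)
    finally show ?thesis .
  qed
  show ?thesis using d by (simp add: eq[abs_def])
qed

lemma hess_deriv:
  assumes "grad f differentiable at x"
  shows "(grad f has_derivative (\<lambda>h. hess f x *v h)) (at x)"
proof -
  let ?D = "frechet_derivative (grad f) (at x)"
  have d: "(grad f has_derivative ?D) (at x)" using assms frechet_derivative_works by blast
  then have lin: "linear ?D" using has_derivative_linear by blast
  have "hess f x *v h = ?D h" for h
    unfolding hess_def using lin by (simp add: matrix_works)
  then show ?thesis using d by simp
qed

lemma convex_grad_ineq:
  fixes f :: "real^'n \<Rightarrow> real"
  assumes cvx: "convex_on UNIV f" and d: "\<And>x. f differentiable at x"
  shows "f x + grad f x \<bullet> (y - x) \<le> f y"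
proof -
  define h where "h t = f (x + t *\<^sub>R (y - x))" for t :: real
  have ch: "convex_on UNIV h"
  proof (rule convex_onI)
    fix u s t :: real
    assume "u > 0" "u < 1"
    have "x + ((1 - u) *\<^sub>R s + u *\<^sub>R t) *\<^sub>R (y - x)
        = (1 - u) *\<^sub>R (x + s *\<^sub>R (y - x)) + u *\<^sub>R (x + t *\<^sub>R (y - x))"
      by (simp add: algebra_simps)
    then show "h ((1 - u) *\<^sub>R s + u *\<^sub>R t) \<le> (1 - u) * h s + u * h t"
      unfolding h_def using convex_onD[OF cvx, of u] \<open>u > 0\<close> \<open>u < 1\<close> by simp
  qed simp
  have "((\<lambda>t. x + t *\<^sub>R (y - x)) has_derivative (\<lambda>t. t *\<^sub>R (y - x))) (at 0)"
    by (auto intro!: derivative_eq_intros)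
  moreover have "(f has_derivative (\<lambda>h. grad f x \<bullet> h)) (at (x + 0 *\<^sub>R (y - x)))"
    using grad_deriv[OF d, of x] by simp
  ultimately have "((f \<circ> (\<lambda>t. x + t *\<^sub>R (y - x))) has_derivative
      ((\<lambda>h. grad f x \<bullet> h) \<circ> (\<lambda>t. t *\<^sub>R (y - x)))) (at 0)"
    by (rule diff_chain_at)
  moreover have "f \<circ> (\<lambda>t. x + t *\<^sub>R (y - x)) = h"
    by (simp add: h_def[abs_def] o_def)
  moreover have "(\<lambda>h. grad f x \<bullet> h) \<circ> (\<lambda>t. t *\<^sub>R (y - x)) = (*) (grad f x \<bullet> (y - x))"
    by (simp add: o_def fun_eq_iff mult.commute)
  ultimately have hd: "(h has_field_derivative (grad f x \<bullet> (y - x))) (at 0 within UNIV)"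
    unfolding has_field_derivative_def by simp
  have "h 1 - h 0 \<ge> grad f x \<bullet> (y - x) * (1 - 0)"
    using convex_on_imp_above_tangent[OF ch connected_UNIV _ UNIV_I[of 1] hd] by simp
  then show ?thesis unfolding h_def by simp
qed

lemma key_surj:
  fixes f :: "real^'n \<Rightarrow> real"
  assumes cvx: "convex_on UNIV f" and d: "\<And>x. f differentiable at x"
    and F: "finite F" "F \<subseteq> range (grad f)"
    and p: "p \<in> interior (convex hull F)"
  shows "p \<in> range (grad f)"
proof -
  obtain r where r: "r > 0" "cball p r \<subseteq> convex hull F"
  proof -
    have "open (interior (convex hull F))" by simp
    then have "\<forall>x\<in>interior (convex hull F). \<exists>e>0. cball x e \<subseteq> interior (convex hull F)"
      by (simp only: open_contains_cball)
    then obtain r where "r > 0" "cball p r \<subseteq> interior (convex hull F)"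
      using p by blast
    then show ?thesis using that interior_subset by blast
  qed
  have Fne: "F \<noteq> {}" using p by auto
  define X where "X q = (SOME x. grad f x = q)" for q
  have X: "grad f (X q) = q" if "q \<in> F" for q
  proof -
    have "\<exists>x. grad f x = q" using F(2) that by blast
    then show ?thesis unfolding X_def by (rule someI_ex)
  qed
  define A where "A = Min ((\<lambda>q. f (X q) - q \<bullet> X q) ` F)"
  have A: "A \<le> f (X q) - q \<bullet> X q" if "q \<in> F" for q
    unfolding A_def using F(1) that by simp
  have dir: "\<exists>q\<in>F. r * norm y \<le> (q - p) \<bullet> y" for y
  proof (cases "y = 0")
    case True then show ?thesis using Fne by auto
  next
    case False
    define z where "z = p + (r / norm y) *\<^sub>R y"
    have "z \<in> cball p r" using r False by (simp add: z_def dist_norm)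
    then have zh: "z \<in> convex hull F" using r by blast
    define M where "M = Max ((\<lambda>q. y \<bullet> q) ` F)"
    have "convex hull F \<subseteq> {w. y \<bullet> w \<le> M}"
      by (rule hull_minimal) (auto simp: M_def F(1) convex_halfspace_le)
    with zh have yz: "y \<bullet> z \<le> M" by blast
    have "M \<in> (\<lambda>q. y \<bullet> q) ` F"
      unfolding M_def using F(1) Fne by (intro Max_in) auto
    then obtain q where q: "q \<in> F" "M = y \<bullet> q" by blast
    have yz2: "y \<bullet> z = y \<bullet> p + r * norm y"
      using False by (simp add: z_def inner_add_right power2_norm_eq_inner[symmetric] power2_eq_square)
    have e: "(q - p) \<bullet> y = q \<bullet> y - p \<bullet> y" by (simp add: inner_diff_left)
    have e2: "y \<bullet> q = q \<bullet> y" "y \<bullet> p = p \<bullet> y" by (simp_all add: inner_commute)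
    have "r * norm y \<le> (q - p) \<bullet> y" using yz yz2 q(2) e e2 by linarith
    then show ?thesis using q(1) by blast
  qed
  define \<psi> where "\<psi> y = f y - p \<bullet> y" for y
  have lowb: "A + r * norm y \<le> \<psi> y" for y
  proof -
    obtain q where q: "q \<in> F" "r * norm y \<le> (q - p) \<bullet> y" using dir by blast
    have "f (X q) + q \<bullet> (y - X q) \<le> f y"
      using convex_grad_ineq[OF cvx d, of "X q" y] X[OF q(1)] by simp
    then show ?thesis using A[OF q(1)] q(2)
      by (simp add: \<psi>_def inner_diff_right inner_diff_left inner_commute)
  qed
  have contf: "continuous_on UNIV f"
    by (intro continuous_at_imp_continuous_on ballI differentiable_imp_continuous_within d)
  have cont: "continuous_on UNIV \<psi>"
    unfolding \<psi>_def by (intro continuous_intros contf)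
  define R where "R = (\<psi> 0 - A) / r"
  have "R \<ge> 0" using lowb[of 0] r by (simp add: R_def)
  obtain x0 where x0: "x0 \<in> cball 0 R" "\<forall>y\<in>cball 0 R. \<psi> x0 \<le> \<psi> y"
    using continuous_attains_inf[of "cball 0 R" \<psi>] \<open>R \<ge> 0\<close>
      continuous_on_subset[OF cont] by auto
  have glob: "\<psi> x0 \<le> \<psi> y" for y
  proof (cases "y \<in> cball 0 R")
    case True then show ?thesis using x0 by blast
  next
    case False
    then have "norm y > R" by simp
    then have "A + r * R < A + r * norm y" using r by simp
    also have "A + r * R = \<psi> 0" using r by (simp add: R_def)
    finally have "\<psi> 0 < \<psi> y" using lowb[of y] by linarith
    moreover have "\<psi> x0 \<le> \<psi> 0" using x0 \<open>R \<ge> 0\<close> by simp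
    ultimately show ?thesis by linarith
  qed
  have "(\<psi> has_derivative (\<lambda>h. grad f x0 \<bullet> h - p \<bullet> h)) (at x0)"
    unfolding \<psi>_def
    by (rule has_derivative_diff[OF grad_deriv[OF d] has_derivative_inner_right[OF has_derivative_ident]])
  from differential_zero_maxmin[OF UNIV_I open_UNIV this] glob
  have "(\<lambda>h. grad f x0 \<bullet> h - p \<bullet> h) = (\<lambda>h. 0)" by blast
  then have "grad f x0 \<bullet> (grad f x0 - p) - p \<bullet> (grad f x0 - p) = 0"
    using fun_cong[of "\<lambda>h. grad f x0 \<bullet> h - p \<bullet> h" "\<lambda>h. 0" "grad f x0 - p"] by simp
  then have "(grad f x0 - p) \<bullet> (grad f x0 - p) = 0" by (simp add: inner_diff_left)
  then have "grad f x0 = p" by simp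
  then show ?thesis using rangeI[of "grad f" x0] by simp
qed

lemma sard_cart:
  fixes g :: "real^'n \<Rightarrow> real^'n"
  assumes der: "\<And>x. (g has_derivative (\<lambda>h. H x *v h)) (at x)"
    and det: "\<And>x. det (H x) = 0"
  shows "interior (range g) = {}"
proof -
  have dimeq: "dim (UNIV :: ((real^'n) \<times> (real^'n)) set) = dim (UNIV :: (real^('n bit0)) set)"
    by (simp add: dim_UNIV)
  obtain f e where fs: "linear f" "linear e" "f ` UNIV = (UNIV :: (real^('n bit0)) set)"
    "e ` UNIV = (UNIV :: ((real^'n) \<times> (real^'n)) set)"
    "\<And>x. x \<in> UNIV \<Longrightarrow> norm (f x) = norm x" "\<And>y. y \<in> UNIV \<Longrightarrow> norm (e y) = norm y"
    "\<And>x. x \<in> UNIV \<Longrightarrow> e (f x) = x" "\<And>y. y \<in> UNIV \<Longrightarrow> f (e y) = y"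
    by (rule isometries_subspaces[OF subspace_UNIV subspace_UNIV dimeq]) (rule that)
  have f: "linear f" "linear e" "f ` UNIV = (UNIV :: (real^('n bit0)) set)"
    "e ` UNIV = (UNIV :: ((real^'n) \<times> (real^'n)) set)"
    "\<And>x. e (f x) = x" "\<And>y. f (e y) = y"
    using fs by simp_all
  define L where "L z = (g (fst z), snd z)" for z :: "(real^'n) \<times> (real^'n)"
  define DL where "DL w z = (H (fst w) *v fst z, snd z)" for w z :: "(real^'n) \<times> (real^'n)"
  have dL: "(L has_derivative DL w) (at w)" for w
  proof -
    have "((\<lambda>z. g (fst z)) has_derivative (\<lambda>z. H (fst w) *v fst z)) (at w)"
      using diff_chain_at[OF has_derivative_fst[OF has_derivative_ident] der[of "fst w"]]
      by (simp add: o_def)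
    then show ?thesis
      unfolding L_def DL_def
      by (intro has_derivative_Pair has_derivative_snd[OF has_derivative_ident])
  qed
  define F where "F = f \<circ> L \<circ> e"
  define DF where "DF z = f \<circ> DL (e z) \<circ> e" for z
  have dF: "(F has_derivative DF z) (at z within UNIV)" for z
  proof -
    have "((L \<circ> e) has_derivative (DL (e z) \<circ> e)) (at z)"
      by (rule diff_chain_at[OF linear_imp_has_derivative[OF f(2)] dL])
    then have "((f \<circ> (L \<circ> e)) has_derivative (f \<circ> (DL (e z) \<circ> e))) (at z)"
      by (rule diff_chain_at[OF _ linear_imp_has_derivative[OF f(1)]])
    then show ?thesis by (simp add: F_def DF_def o_assoc)
  qed
  have rk: "rank (matrix (DF z)) < CARD('n bit0)" for z
  proof -
    have linDF: "linear (DF z)" using dF[of z] has_derivative_linear by blast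
    obtain w where w: "w \<noteq> 0" "H (fst (e z)) *v w = 0"
    proof -
      have "\<not> invertible (H (fst (e z)))" by (simp add: invertible_det_nz det)
      then have "\<not> (\<exists>B. B ** H (fst (e z)) = mat 1)" using invertible_left_inverse by blast
      then have "\<not> (\<forall>x. H (fst (e z)) *v x = 0 \<longrightarrow> x = 0)"
        using matrix_left_invertible_ker by blast
      then show ?thesis using that by blast
    qed
    have "DF z (f (w, 0)) = 0"
      using w f(5) linear_0[OF f(1)] by (simp add: DF_def DL_def zero_prod_def[symmetric])
    moreover have "f (w, 0) \<noteq> 0"
    proof
      assume "f (w, 0) = 0"
      then have "(w, 0) = (0::(real^'n) \<times> (real^'n))"
        using f(5)[of "(w,0)"] linear_0[OF f(2)] by simp
      then show False using w(1) by (simp add: zero_prod_def)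
    qed
    moreover have "DF z 0 = 0" using linDF linear_0 by blast
    ultimately have "\<not> inj (DF z)" by (metis injD)
    then have "\<not> inj ((*v) (matrix (DF z)))"
      using matrix_vector_mul(2)[OF linDF] by simp
    then have "rank (matrix (DF z)) \<noteq> CARD('n bit0)"
      using full_rank_injective by blast
    moreover have "rank (matrix (DF z)) \<le> CARD('n bit0)" using rank_bound[of "matrix (DF z)"] by simp
    ultimately show ?thesis by linarith
  qed
  have neg: "negligible (F ` UNIV)"
    by (rule baby_Sard[OF _ dF rk]) simp
  show ?thesis
  proof (rule ccontr)
    assume ne: "interior (range g) \<noteq> {}"
    have "open (f ` (interior (range g) \<times> UNIV))"
      using f(1,3) by (intro open_surjective_linear_image open_Times) auto
    moreover have "f ` (interior (range g) \<times> UNIV) \<noteq> {}" using ne by auto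
    moreover have "f ` (interior (range g) \<times> UNIV) \<subseteq> F ` UNIV"
    proof
      fix y assume "y \<in> f ` (interior (range g) \<times> UNIV)"
      then obtain q u where qu: "q \<in> interior (range g)" "y = f (q, u)" by blast
      then obtain x where "q = g x" using interior_subset by blast
      with qu have xu: "y = f (g x, u)" by simp
      have "y = F (f (x, u))" using xu f(5) by (simp add: F_def L_def)
      then show "y \<in> F ` UNIV" by blast
    qed
    ultimately show False
      using negligible_subset[OF neg] open_not_negligible by blast
  qed
qed

theorem proposition4p9:
  fixes \<phi> :: "real^'n \<Rightarrow> real"
  assumes "C2 \<phi>" and "convex_on UNIV \<phi>"
  shows "(\<forall>x. det (hess \<phi> x) = 0) \<longleftrightarrow>
         (\<exists>v c. v \<noteq> 0 \<and> (\<forall>x. v \<bullet> grad \<phi> x = c))"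
proof -
  from assms(1) have d: "\<And>x. \<phi> differentiable at x" and dg: "\<And>x. grad \<phi> differentiable at x"
    by (auto simp: C2_def)
  show ?thesis
  proof
    assume det0: "\<forall>x. det (hess \<phi> x) = 0"
    have int0: "interior (range (grad \<phi>)) = {}"
      by (rule sard_cart[of "grad \<phi>" "hess \<phi>"]) (use hess_deriv[OF dg] det0 in auto)
    show "\<exists>v c. v \<noteq> 0 \<and> (\<forall>x. v \<bullet> grad \<phi> x = c)"
    proof (cases "aff_dim (range (grad \<phi>)) < int CARD('n)")
      case True
      then have "aff_dim (range (grad \<phi>)) < DIM(real^'n)" by simp
      then obtain a b where "a \<noteq> 0" "range (grad \<phi>) \<subseteq> {x. a \<bullet> x = b}"
        by (rule aff_lowdim_subset_hyperplane)
      then show ?thesis by blast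
    next
      case False
      then have ad: "aff_dim (range (grad \<phi>)) = int CARD('n)"
        using aff_dim_le_DIM[of "range (grad \<phi>)"] by simp
      obtain B where B: "B \<subseteq> range (grad \<phi>)" "\<not> affine_dependent B"
        "affine hull (range (grad \<phi>)) = affine hull B"
        using affine_basis_exists by blast
      have "aff_dim (affine hull B) = aff_dim (affine hull (range (grad \<phi>)))" using B(3) by simp
      then have "aff_dim B = int CARD('n)" using ad by simp
      then have cB: "card B = Suc CARD('n)" using aff_dim_affine_independent[OF B(2)] by simp
      have fin: "finite B" using B(2) aff_independent_finite by blast
      have ne: "interior (convex hull B) \<noteq> {}"
        using interior_convex_hull_eq_empty[of B] cB B(2) by simp
      have "interior (convex hull B) \<subseteq> range (grad \<phi>)"
        using key_surj[OF assms(2) d fin B(1)] by blast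
      then have "interior (convex hull B) \<subseteq> interior (range (grad \<phi>))"
        using interior_maximal open_interior by blast
      then show ?thesis using int0 ne by blast
    qed
  next
    assume "\<exists>v c. v \<noteq> 0 \<and> (\<forall>x. v \<bullet> grad \<phi> x = c)"
    then obtain v c where v: "v \<noteq> 0" "\<forall>x. v \<bullet> grad \<phi> x = c" by blast
    show "\<forall>x. det (hess \<phi> x) = 0"
    proof
      fix x
      have "((\<lambda>y. v \<bullet> grad \<phi> y) has_derivative (\<lambda>h. v \<bullet> (hess \<phi> x *v h))) (at x)"
        by (rule has_derivative_inner_right[OF hess_deriv[OF dg]])
      moreover have "((\<lambda>y. v \<bullet> grad \<phi> y) has_derivative (\<lambda>h. 0)) (at x)"
        using v(2) by simp
      ultimately have z: "(\<lambda>h. v \<bullet> (hess \<phi> x *v h)) = (\<lambda>h. 0)"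
        by (rule has_derivative_unique)
      let ?w = "transpose (hess \<phi> x) *v v"
      have a1: "v \<bullet> (hess \<phi> x *v ?w) = 0"
        using fun_cong[OF z, of ?w] by (simp only:)
      have a2: "v v* hess \<phi> x = ?w"
        using vector_transpose_matrix[of v "transpose (hess \<phi> x)"] by (simp only: transpose_transpose)
      have a3: "(v v* hess \<phi> x) \<bullet> ?w = v \<bullet> (hess \<phi> x *v ?w)"
        by (rule dot_lmul_matrix)
      have "?w \<bullet> ?w = 0" using a3 unfolding a2 a1 .
      then have w0: "?w = 0" by (simp only: inner_eq_zero_iff)
      have "\<not> invertible (transpose (hess \<phi> x))"
      proof
        assume "invertible (transpose (hess \<phi> x))"
        then obtain Bm where "Bm ** transpose (hess \<phi> x) = mat 1"
          using invertible_def by blast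
        then have "\<forall>y. transpose (hess \<phi> x) *v y = 0 \<longrightarrow> y = 0"
          using matrix_left_invertible_ker by blast
        then show False using w0 v(1) by blast
      qed
      then have "det (transpose (hess \<phi> x)) = 0" using invertible_det_nz by blast
      then show "det (hess \<phi> x) = 0" by (simp add: det_transpose)
    qed
  qed
qed

end
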